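(* Let $\Delta$ be a Laplacian admitting spectral decimation with spectral decimation function $R$, normalization constant $c_\Delta=R'(0)>1$, and exceptional (forbidden) set $E$ (see context). Suppose $b$ is a real number dominating all forbidden eigenvalues and $R^{-1}[0,b]\subseteq[0,b]$. Let $\{\phi_j\}_{j=0}^L$ be the partial inverses of $R$, ordered so that $\max\phi_i\le\min\phi_{i+1}$. Assume $\phi_0(b)<b$ and $\phi_0$ is strictly convex. If for some $0\le J<L$ $$M:=\max\phi_J|_{[0,b]}<\min\phi_{J+1}|_{[0,b]}=:m,$$ then there exist gaps in the spectrum of $\Delta$. In fact, there is a bound, independent of $k$, on the number of elements of the spectrum in the intervals $(A_k,B_k)$, $k\ge0$, where $$A_k=c_\Delta^{k}\lim_{n\to\infty}c_\Delta^{n}\phi_0^{(n-1)}(M)=\lim_{n\to\infty}c_\Delta^{n}\phi_0^{(n-k-1)}(M),\qquad B_k=c_\Delta^{k}\lim_{n\to\infty}c_\Delta^{n}\phi_0^{(n-1)}(m)=\lim_{n\to\infty}c_\Delta^{n}\phi_0^{(n-k-1)}(m).$$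
   Context: Setting: a self-similar fractal approximated by graphs with discrete Laplacians $\Delta_n$ (matrices $M_n$), where $M_1=\begin{pmatrix}A&B\\C&D\end{pmatrix}$ (block of level-0 vertices first), $S(z)=(1-z)A-B(D-z)^{-1}C=\phi(z)(M_0-R(z))$ with scalar rational functions $\phi$, $R$; $R(0)=0$ and $c_\Delta=R'(0)>1$. The exceptional (forbidden) set is $E=\sigma(D)\cup\{z:\phi(z)=0\}$. The partial inverses $\phi_0,\dots,\phi_L$ of $R$ are its inverse branches, with $\phi_0$ the one having $0$ in its range; $\phi_0^{(n)}$ is the $n$-fold composition and $\phi_w=\phi_{w_n}\circ\cdots\circ\phi_{w_1}$ for a word $w=w_n\dots w_1$. The Laplacian $\Delta u=\lim_n c_\Delta^n\Delta_nu$ admits spectral decimation if all its eigenvalues are of the form $c_\Delta^{i}\lim_{n\to\infty}c_\Delta^{n+j}\phi_0^{(n)}\circ\phi_w(x)$ with $x\in\sigma(\Delta_i)\cup E$, $i\ge0$, $|w|=j$. Gaps in the spectrum means: listing the eigenvalues as $0\le\lambda_1\le\lambda_2\le\cdots$, $\limsup_k\lambda_{k+1}/\lambda_k>1$. *)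

theory Defs
  imports "HOL-Analysis.Analysis" "HOL-Computational_Algebra.Polynomial"
begin

definition strictly_convex_on :: "real set \<Rightarrow> (real \<Rightarrow> real) \<Rightarrow> bool" where
  "strictly_convex_on S f \<longleftrightarrow>
     (\<forall>x\<in>S. \<forall>y\<in>S. \<forall>t::real. x \<noteq> y \<and> 0 < t \<and> t < 1 \<longrightarrow>
        f (t * x + (1 - t) * y) < t * f x + (1 - t) * f y)"

definition real_rational_fun :: "(real \<Rightarrow> real) \<Rightarrow> bool" where
  "real_rational_fun R \<longleftrightarrow>
     (\<exists>p q :: real poly. q \<noteq> 0 \<and> (\<forall>x. poly q x \<noteq> 0 \<longrightarrow> R x = poly p x / poly q x))"

definition partial_inverses ::
  "(real \<Rightarrow> real) \<Rightarrow> real \<Rightarrow> nat \<Rightarrow> (nat \<Rightarrow> real \<Rightarrow> real) \<Rightarrow> bool" where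
  "partial_inverses R b L \<phi> \<longleftrightarrow>
     (\<forall>j\<le>L. continuous_on {0..b} (\<phi> j) \<and> (\<forall>y\<in>{0..b}. R (\<phi> j y) = y)) \<and>
     {x. R x \<in> {0..b}} = (\<Union>j\<le>L. \<phi> j ` {0..b}) \<and>
     0 \<in> \<phi> 0 ` {0..b} \<and>
     (\<forall>i<L. \<forall>x\<in>{0..b}. \<forall>y\<in>{0..b}. \<phi> i x \<le> \<phi> (Suc i) y)"

fun phi_word :: "(nat \<Rightarrow> real \<Rightarrow> real) \<Rightarrow> nat list \<Rightarrow> real \<Rightarrow> real" where
  "phi_word \<phi> [] = id"
| "phi_word \<phi> (a # w) = \<phi> a \<circ> phi_word \<phi> w"

definition decimation_values ::
  "real \<Rightarrow> nat \<Rightarrow> (nat \<Rightarrow> real \<Rightarrow> real) \<Rightarrow> (nat \<Rightarrow> real set) \<Rightarrow> real set \<Rightarrow> real set" where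
  "decimation_values c L \<phi> \<sigma> E =
     {lam. \<exists>i w x l. x \<in> \<sigma> i \<union> E \<and> set w \<subseteq> {..L} \<and>
        ((\<lambda>n. c ^ (n + length w) * (\<phi> 0 ^^ n) (phi_word \<phi> w x)) \<longlonglongrightarrow> l) \<and>
        lam = c ^ i * l}"

text \<open>Delta (with eigenvalues ev 0 \<le> ev 1 \<le> ..., listed with multiplicity) admits
  spectral decimation: every eigenvalue is one of the decimation values.\<close>
definition admits_spectral_decimation ::
  "(nat \<Rightarrow> real) \<Rightarrow> real \<Rightarrow> nat \<Rightarrow> (nat \<Rightarrow> real \<Rightarrow> real) \<Rightarrow> (nat \<Rightarrow> real set) \<Rightarrow> real set \<Rightarrow> bool" where
  "admits_spectral_decimation ev c L \<phi> \<sigma> E \<longleftrightarrow> range ev \<subseteq> decimation_values c L \<phi> \<sigma> E"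

definition has_spectral_gaps :: "(nat \<Rightarrow> real) \<Rightarrow> bool" where
  "has_spectral_gaps ev \<longleftrightarrow> limsup (\<lambda>k. ereal (ev (Suc k) / ev k)) > 1"

end

theory Submission
  imports Defs
begin


lemma rat_bound:
  fixes R :: "real \<Rightarrow> real"
  assumes rat: "real_rational_fun R" and R0: "R 0 = 0"
    and der: "(R has_real_derivative c) (at 0)"
  shows "\<exists>\<delta>>0. \<exists>K\<ge>0. \<forall>x. 0 < x \<and> x \<le> \<delta> \<longrightarrow> \<bar>R x - c*x\<bar> \<le> K * x^2"
proof -
  obtain p q where q: "q \<noteq> 0" and pq: "\<And>x. poly q x \<noteq> 0 \<Longrightarrow> R x = poly p x / poly q x"
    using rat unfolding real_rational_fun_def by blast
  obtain q1 where q1: "q = [:-0,1:]^order 0 q * q1" and q1n: "\<not> [:-0,1:] dvd q1"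
    using order_decomp[OF q] by blast
  define t where "t = order 0 q"
  have q10: "poly q1 0 \<noteq> 0" using q1n poly_eq_0_iff_dvd by blast
  have q1nz: "q1 \<noteq> 0" using q10 by auto
  have polyq: "poly q x = x^t * poly q1 x" for x
    by (subst q1) (simp add: poly_power t_def)
  have Rq: "R x = poly p x / (x^t * poly q1 x)" if "x \<noteq> 0" "poly q1 x \<noteq> 0" for x
    using pq[of x] polyq[of x] that by simp
  obtain \<delta>0 where d0: "\<delta>0 > 0" and d0r: "\<forall>y\<in>{x. poly q1 x = 0}. y \<noteq> 0 \<longrightarrow> \<delta>0 \<le> dist 0 y"
    using finite_set_avoid[OF poly_roots_finite[OF q1nz], of 0] by blast
  define \<delta> where "\<delta> = min (\<delta>0/2) 1"
  have dpos: "\<delta> > 0" using d0 by (simp add: \<delta>_def)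
  have q1ne: "poly q1 x \<noteq> 0" if "\<bar>x\<bar> \<le> \<delta>" for x
  proof
    assume h: "poly q1 x = 0"
    then have "x \<noteq> 0" using q10 by auto
    with h d0r have "\<delta>0 \<le> \<bar>x\<bar>" by (auto simp: dist_real_def)
    with that d0 show False by (simp add: \<delta>_def)
  qed
  have lim: "((\<lambda>y. (R y - R 0) / (y - 0)) \<longlongrightarrow> c) (at 0)"
    using der has_field_derivative_iff by blast
  have elim: "((\<lambda>y. (R y - c*y) / y) \<longlongrightarrow> 0) (at 0)"
  proof -
    have "((\<lambda>y. (R y - R 0) / (y - 0) - c) \<longlongrightarrow> 0) (at 0)"
      using tendsto_diff[OF lim tendsto_const[of c]] by simp
    moreover have "\<forall>\<^sub>F x in at 0. (R x - R 0) / (x - 0) - c = (R x - c * x) / x"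
      unfolding eventually_at_filter by (auto simp: R0 field_simps)
    ultimately show ?thesis by (rule Lim_transform_eventually)
  qed
  define D where "D = p - smult c ([:0,1:] * q)"
  have polyD: "poly D x = poly p x - c * x * poly q x" for x
    by (simp add: D_def)
  show ?thesis
  proof (cases "D = 0")
    case True
    have "\<forall>x. 0 < x \<and> x \<le> \<delta> \<longrightarrow> \<bar>R x - c*x\<bar> \<le> 0 * x^2"
    proof (intro allI impI)
      fix x :: real assume x: "0 < x \<and> x \<le> \<delta>"
      then have "poly q x \<noteq> 0" using q1ne[of x] polyq[of x] by auto
      moreover have "poly p x = c * x * poly q x" using polyD[of x] True by simp
      ultimately show "\<bar>R x - c*x\<bar> \<le> 0 * x^2" using pq[of x] by simp
    qed
    then show ?thesis using dpos by blast
  next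
    case False
    obtain D1 where D1: "D = [:-0,1:]^order 0 D * D1" and D1n: "\<not> [:-0,1:] dvd D1"
      using order_decomp[OF False] by blast
    define s where "s = order 0 D"
    have D10: "poly D1 0 \<noteq> 0" using D1n poly_eq_0_iff_dvd by blast
    have polyD': "poly D x = x^s * poly D1 x" for x
      by (subst D1) (simp add: poly_power s_def)
    have key: "x^s * poly D1 x = x^(t+1) * poly q1 x * ((R x - c*x)/x)"
      if "x \<noteq> 0" "poly q1 x \<noteq> 0" for x
    proof -
      have "x^s * poly D1 x = poly p x - c * x * poly q x" using polyD polyD' by metis
      also have "poly p x = R x * (x^t * poly q1 x)" using Rq[OF that] that by simp
      finally have h: "x^s * poly D1 x = x^t * poly q1 x * (R x - c*x)" using polyq[of x]
        by (simp add: algebra_simps)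
      have "x^(t+1) * poly q1 x * ((R x - c*x)/x) = x^t * poly q1 x * (R x - c*x)"
        using that by (simp add: field_simps)
      then show ?thesis using h by simp
    qed
    have sge: "s \<ge> t + 2"
    proof (rule ccontr)
      assume "\<not> s \<ge> t + 2"
      then have st: "s \<le> t + 1" by simp
      have ev: "\<forall>\<^sub>F x in at 0. x^(t+1-s) * poly q1 x * ((R x - c*x)/x) = poly D1 x"
      proof -
        have "\<forall>x. x \<noteq> 0 \<and> dist x 0 < \<delta> \<longrightarrow> x ^ (t + 1 - s) * poly q1 x * ((R x - c * x) / x) = poly D1 x"
        proof (intro allI impI)
          fix x :: real assume xx: "x \<noteq> 0 \<and> dist x 0 < \<delta>"
          then have "\<bar>x\<bar> \<le> \<delta>" by (simp add: dist_real_def)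
          then have h: "poly q1 x \<noteq> 0" by (rule q1ne)
          from xx have x0: "x \<noteq> 0" by simp
          show "x ^ (t + 1 - s) * poly q1 x * ((R x - c * x) / x) = poly D1 x"
          proof -
            have "x^s * poly D1 x = x^s * (x^(t+1-s) * poly q1 x * ((R x - c*x)/x))"
            proof -
              have p: "x^s * x^(t+1-s) = x^(t+1)" using st by (simp add: power_add[symmetric])
              have "x^s * (x^(t+1-s) * poly q1 x * ((R x - c*x)/x)) = (x^s * x^(t+1-s)) * poly q1 x * ((R x - c*x)/x)"
                by (simp only: mult.assoc)
              also have "\<dots> = x^(t+1) * poly q1 x * ((R x - c*x)/x)" by (simp only: p)
              also have "\<dots> = x^s * poly D1 x" using key[OF x0 h] by (rule sym)
              finally show ?thesis by (rule sym)
            qed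
            moreover have "x^s \<noteq> 0" using x0 by simp
            ultimately show "x ^ (t + 1 - s) * poly q1 x * ((R x - c * x) / x) = poly D1 x"
              by (metis mult_left_cancel)
          qed
        qed
        then show ?thesis unfolding eventually_at using dpos by auto
      qed
      have "((\<lambda>x. x^(t+1-s) * poly q1 x * ((R x - c*x)/x)) \<longlongrightarrow> 0^(t+1-s) * poly q1 0 * 0) (at 0)"
        by (intro tendsto_intros elim) 
      then have "((\<lambda>x. poly D1 x) \<longlongrightarrow> 0) (at 0)"
        using Lim_transform_eventually[OF _ ev] by simp
      moreover have "((\<lambda>x. poly D1 x) \<longlongrightarrow> poly D1 0) (at 0)"
        by (intro tendsto_intros)
      ultimately have "poly D1 0 = 0" using tendsto_unique[OF at_neq_bot] by metis
      with D10 show False by simp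
    qed
    define g where "g x = x^(s-t-2) * poly D1 x / poly q1 x" for x
    have cont: "continuous_on {0..\<delta>} g"
      unfolding g_def using q1ne dpos
      by (intro continuous_intros) auto
    have "compact (g ` {0..\<delta>})" by (intro compact_continuous_image cont) simp
    then have "bounded (g ` {0..\<delta>})" by (rule compact_imp_bounded)
    then obtain K where K: "\<And>x. x \<in> {0..\<delta>} \<Longrightarrow> \<bar>g x\<bar> \<le> K"
      unfolding bounded_real by (auto simp del: atLeastAtMost_iff)
    have K0: "K \<ge> 0" using K[of 0] dpos by force
    have "\<forall>x. 0 < x \<and> x \<le> \<delta> \<longrightarrow> \<bar>R x - c*x\<bar> \<le> K * x^2"
    proof (intro allI impI)
      fix x :: real assume x: "0 < x \<and> x \<le> \<delta>"
      have h: "poly q1 x \<noteq> 0" using q1ne x by simp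
      have "x^s * poly D1 x = x^(t+1) * poly q1 x * ((R x - c*x)/x)" using key[OF _ h] x by simp
      moreover have "x^s = x^(t+1) * x * x^(s-t-2)"
      proof -
        have "s = (t+1) + 1 + (s-t-2)" using sge by simp
        then have "x^s = x^((t+1) + 1 + (s-t-2))" by (rule arg_cong)
        also have "\<dots> = x^(t+1) * x * x^(s-t-2)" by (simp only: power_add power_one_right)
        finally show ?thesis .
      qed
      ultimately have "x^(t+1) * (x * x^(s-t-2) * poly D1 x) = x^(t+1) * (poly q1 x * ((R x - c*x)/x))"
        by (simp only: mult.assoc)
      moreover have "x^(t+1) \<noteq> 0" using x by simp
      ultimately have "poly q1 x * ((R x - c*x)/x) = x * x^(s-t-2) * poly D1 x"
        by (metis mult_left_cancel)
      then have "R x - c*x = x^2 * g x" using x h by (simp add: g_def field_simps power2_eq_square)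
      then have "\<bar>R x - c*x\<bar> = x^2 * \<bar>g x\<bar>" by (simp add: abs_mult)
      also have "\<dots> \<le> x^2 * K" using K[of x] x by (intro mult_left_mono) auto
      finally show "\<bar>R x - c*x\<bar> \<le> K * x^2" by (simp add: mult.commute)
    qed
    then show ?thesis using dpos K0 by blast
  qed
qed



locale phi0 =
  fixes R :: "real \<Rightarrow> real" and c b :: real and f :: "real \<Rightarrow> real"
  assumes c1: "c > 1" and bpos: "b > 0"
    and fmap: "\<And>y. y \<in> {0..b} \<Longrightarrow> f y \<in> {0..b}"
    and f0: "f 0 = 0"
    and Rf: "\<And>y. y \<in> {0..b} \<Longrightarrow> R (f y) = y"
    and fb: "f b < b"
    and conv: "strictly_convex_on {0..b} f"
    and R0: "R 0 = 0"
    and bnd: "\<exists>\<delta>>0. \<exists>K\<ge>0. \<forall>x. 0 < x \<and> x \<le> \<delta> \<longrightarrow> \<bar>R x - c*x\<bar> \<le> K * x^2"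
begin

lemma fge0: "y \<in> {0..b} \<Longrightarrow> 0 \<le> f y" and fleb: "y \<in> {0..b} \<Longrightarrow> f y \<le> b"
  using fmap by auto

lemma slope: assumes "0 < x" "x < y" "y \<le> b" shows "f x < (x/y) * f y"
proof -
  have "f ((x/y) * y + (1 - x/y) * 0) < (x/y) * f y + (1 - x/y) * f 0"
    apply (rule conv[unfolded strictly_convex_on_def, rule_format])
    using assms by auto
  then show ?thesis using assms f0 by simp
qed

lemma fpos: assumes "0 < y" "y \<le> b" shows "0 < f y"
proof -
  have "f y \<noteq> 0" using Rf[of y] R0 assms by auto
  then show ?thesis using fge0[of y] assms by auto
qed

lemma fmono_strict: assumes "0 \<le> x" "x < y" "y \<le> b" shows "f x < f y"
proof (cases "x = 0")
  case True then show ?thesis using fpos assms f0 by auto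
next
  case False
  then have "f x < (x/y) * f y" using slope assms by auto
  also have "\<dots> \<le> f y" using assms fge0[of y] by (intro mult_left_le_one_le) auto
  finally show ?thesis .
qed

lemma fmono: assumes "0 \<le> x" "x \<le> y" "y \<le> b" shows "f x \<le> f y"
  using fmono_strict[OF assms(1) _ assms(3)] assms(2) by (cases "x = y") auto

definition "\<rho> = f b / b"

lemma rho_pos: "0 < \<rho>" and rho_lt1: "\<rho> < 1"
  using fpos[OF bpos order_refl] fb bpos by (auto simp: \<rho>_def)

lemma fle: assumes "y \<in> {0..b}" shows "f y \<le> \<rho> * y"
proof -
  consider "y = 0" | "y = b" | "0 < y \<and> y < b" using assms by force
  then show ?thesis
  proof cases
    case 1 then show ?thesis using f0 by simp
  next
    case 2 then show ?thesis using bpos by (simp add: \<rho>_def)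
  next
    case 3
    then have "f y < (y/b) * f b" using slope by auto
    then show ?thesis by (simp add: \<rho>_def field_simps)
  qed
qed

lemma fley: "y \<in> {0..b} \<Longrightarrow> f y \<le> y"
  using fle[of y] mult_left_le_one_le[of y \<rho>] rho_lt1 rho_pos by auto

lemma flow: assumes "y \<in> {0..b}" shows "y \<le> c * f y"
proof (cases "y = 0")
  case True then show ?thesis using f0 by simp
next
  case False
  then have y0: "0 < y" "y \<le> b" using assms by auto
  have fy: "0 < f y" using fpos y0 by auto
  show ?thesis
  proof (rule ccontr)
    assume "\<not> y \<le> c * f y"
    then have lt: "c * f y < y" by simp
    define \<eta> where "\<eta> = y / f y - c"
    have eta: "\<eta> > 0" using lt fy by (simp add: \<eta>_def field_simps)
    obtain \<delta> K where d: "\<delta> > 0" "K \<ge> 0" and bd: "\<And>x. 0 < x \<Longrightarrow> x \<le> \<delta> \<Longrightarrow> \<bar>R x - c*x\<bar> \<le> K * x^2"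
      using bnd by blast
    define z where "z = min (y/2) (min \<delta> (\<eta>/(K+1)))"
    have z0: "0 < z" using y0 d eta by (simp add: z_def)
    have zy: "z < y" "z \<le> \<delta>" "z \<le> \<eta>/(K+1)" using y0 by (auto simp: z_def)
    have zb: "z \<in> {0..b}" using z0 zy y0 by auto
    have fz: "0 < f z" "f z \<le> z" using fpos z0 zy y0 fley[OF zb] by auto
    have "\<bar>R (f z) - c * f z\<bar> \<le> K * (f z)^2" using bd fz zy by auto
    then have A: "z \<le> c * f z + K * (f z)^2" using Rf[OF zb] by linarith
    have "K * f z \<le> K * z" using fz d mult_left_mono by blast
    also have "K * z < \<eta>"
    proof -
      have "K * z \<le> K * (\<eta>/(K+1))" using mult_left_mono[OF zy(3) d(2)] by simp
      also have "\<dots> < \<eta>" using d eta by (simp add: field_simps)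
      finally show ?thesis .
    qed
    finally have "f z * (K * f z) < f z * \<eta>" using fz(1) mult_strict_left_mono by blast
    then have "K * (f z)^2 < f z * \<eta>" by (simp add: power2_eq_square mult.assoc mult.left_commute)
    with A have "z < f z * (c + \<eta>)" by (simp add: algebra_simps)
    also have "c + \<eta> = y / f y" by (simp add: \<eta>_def)
    finally have B: "z < f z * (y / f y)" .
    have "f z < (z/y) * f y" using slope z0 zy y0 by auto
    then have "f z * (y / f y) < (z/y) * f y * (y / f y)"
      using fy y0 by (intro mult_strict_right_mono) auto
    also have "\<dots> = z" using fy y0 by simp
    finally show False using B by simp
  qed
qed


lemma slope_le: assumes "0 < a" "a \<le> a'" "a' \<le> b" shows "a' * f a \<le> a * f a'"
proof (cases "a = a'")
  case True then show ?thesis by simp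
next
  case False
  then have "f a < (a/a') * f a'" using slope assms by auto
  then have "a' * f a < a' * ((a/a') * f a')" using assms by (intro mult_strict_left_mono) auto
  also have "\<dots> = a * f a'" using assms by simp
  finally show ?thesis by simp
qed

lemma gbound: "\<exists>K2\<ge>0. \<forall>z\<in>{0..b}. c * f z \<le> z + K2 * (f z)^2"
proof -
  obtain \<delta> K where d: "\<delta> > 0" "K \<ge> 0" and bd: "\<And>x. 0 < x \<Longrightarrow> x \<le> \<delta> \<Longrightarrow> \<bar>R x - c*x\<bar> \<le> K * x^2"
    using bnd by blast
  define K2 where "K2 = max K (c*b/\<delta>^2)"
  have K2: "K2 \<ge> 0" "K \<le> K2" "c*b/\<delta>^2 \<le> K2" using d by (auto simp: K2_def)
  have "c * f z \<le> z + K2 * (f z)^2" if z: "z \<in> {0..b}" for z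
  proof -
    have fz: "0 \<le> f z" "f z \<le> b" using fmap[OF z] by auto
    have sq: "0 \<le> K2 * (f z)^2" using K2 by simp
    consider "f z = 0" | "0 < f z \<and> f z \<le> \<delta>" | "\<delta> < f z" using fz by force
    then show ?thesis
    proof cases
      case 1 then show ?thesis using z sq by simp
    next
      case 2
      then have "\<bar>R (f z) - c * f z\<bar> \<le> K * (f z)^2" using bd by auto
      then have "c * f z \<le> z + K * (f z)^2" using Rf[OF z] by linarith
      also have "K * (f z)^2 \<le> K2 * (f z)^2" using K2 by (intro mult_right_mono) auto
      finally show ?thesis by simp
    next
      case 3
      have "c * f z \<le> c * b" using fz c1 by simp
      also have "c * b = (c*b/\<delta>^2) * \<delta>^2" using d by simp
      also have "\<dots> \<le> K2 * \<delta>^2" using K2 d by (intro mult_right_mono) auto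
      also have "\<dots> \<le> K2 * (f z)^2" using K2 3 d by (intro mult_left_mono power_mono) auto
      also have "\<dots> \<le> z + K2 * (f z)^2" using z by simp
      finally show ?thesis .
    qed
  qed
  then show ?thesis using K2 by blast
qed

lemma iter_in: "y \<in> {0..b} \<Longrightarrow> (f^^n) y \<in> {0..b}"
  by (induct n) (auto intro: fge0 fleb)

lemma iter_le: "y \<in> {0..b} \<Longrightarrow> (f^^n) y \<le> \<rho>^n * y"
proof (induct n)
  case 0 then show ?case by simp
next
  case (Suc n)
  have "(f^^Suc n) y = f ((f^^n) y)" by simp
  also have "\<dots> \<le> \<rho> * (f^^n) y" using fle iter_in Suc by blast
  also have "\<dots> \<le> \<rho> * (\<rho>^n * y)" using Suc rho_pos by (intro mult_left_mono) auto
  finally show ?case by simp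
qed

lemma iter_pos: "0 < y \<Longrightarrow> y \<le> b \<Longrightarrow> 0 < (f^^n) y"
proof (induct n)
  case 0 then show ?case by simp
next
  case (Suc n)
  have "(f^^n) y \<in> {0..b}" using iter_in Suc by auto
  then show ?case using fpos Suc by auto
qed

lemma iter_mono: "0 \<le> x \<Longrightarrow> x \<le> y \<Longrightarrow> y \<le> b \<Longrightarrow> (f^^n) x \<le> (f^^n) y"
proof (induct n)
  case 0 then show ?case by simp
next
  case (Suc n)
  have "(f^^n) x \<in> {0..b}" "(f^^n) y \<in> {0..b}" using iter_in Suc by auto
  then show ?case using fmono Suc by auto
qed

definition s :: "nat \<Rightarrow> real \<Rightarrow> real" where "s n y = c^n * (f^^n) y"

lemma s_inc: assumes "y \<in> {0..b}" shows "incseq (\<lambda>n. s n y)"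
proof (rule incseq_SucI)
  fix n
  have z: "(f^^n) y \<in> {0..b}" using iter_in assms by auto
  have "s n y = c^n * (f^^n) y" by (simp add: s_def)
  also have "\<dots> \<le> c^n * (c * f ((f^^n) y))" using flow[OF z] c1 by (intro mult_left_mono) auto
  also have "\<dots> = s (Suc n) y" by (simp add: s_def)
  finally show "s n y \<le> s (Suc n) y" .
qed

lemma s_nonneg: "y \<in> {0..b} \<Longrightarrow> 0 \<le> s n y"
  using iter_in[of y n] c1 by (simp add: s_def)

lemma s_bdd: assumes y: "y \<in> {0..b}" shows "\<exists>B. \<forall>n. s n y \<le> B"
proof -
  obtain K2 where K2: "K2 \<ge> 0" "\<And>z. z \<in> {0..b} \<Longrightarrow> c * f z \<le> z + K2 * (f z)^2"
    using gbound by blast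
  have step: "s (Suc n) y \<le> s n y * (1 + K2*b*\<rho>^n)" for n
  proof -
    define z where "z = (f^^n) y"
    have z: "z \<in> {0..b}" using iter_in y by (simp add: z_def)
    have fz: "0 \<le> f z" "f z \<le> z" using fge0[OF z] fley[OF z] by auto
    have "f z = (f^^Suc n) y" by (simp add: z_def)
    also have "\<dots> \<le> \<rho>^Suc n * y" using iter_le y by blast
    also have "\<dots> \<le> \<rho>^n * b" 
    proof -
      have "\<rho>^Suc n * y \<le> \<rho>^n * y" using rho_pos rho_lt1 y
        by (intro mult_right_mono) (auto simp: power_Suc2 mult_left_le_one_le)
      also have "\<dots> \<le> \<rho>^n * b" using rho_pos y by (intro mult_left_mono) auto
      finally show ?thesis .
    qed
    finally have fzr: "f z \<le> \<rho>^n * b" .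
    have "(f z)^2 \<le> z * (\<rho>^n * b)" unfolding power2_eq_square
      using fz fzr by (intro mult_mono) auto
    then have "c * f z \<le> z + K2 * (z * (\<rho>^n * b))" using K2(2)[OF z] K2(1)
      by (smt (verit) mult_left_mono)
    also have "\<dots> = z * (1 + K2*b*\<rho>^n)" by (simp add: algebra_simps)
    finally have "c * f z \<le> z * (1 + K2*b*\<rho>^n)" .
    then have "c^n * (c * f z) \<le> c^n * (z * (1 + K2*b*\<rho>^n))" using c1 by (intro mult_left_mono) auto
    then show ?thesis by (simp add: s_def z_def algebra_simps)
  qed
  have "s n y \<le> y * exp (K2*b*(1 - \<rho>^n)/(1-\<rho>))" for n
  proof (induct n)
    case 0 then show ?case by (simp add: s_def)
  next
    case (Suc n)
    define a where "a = K2*b*\<rho>^n"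
    define X where "X = K2*b*(1 - \<rho>^n)/(1-\<rho>)"
    have a0: "0 \<le> a" using K2 bpos rho_pos by (simp add: a_def)
    have "s (Suc n) y \<le> s n y * (1 + a)" using step by (simp add: a_def)
    also have "\<dots> \<le> (y * exp X) * (1 + a)" using Suc a0 by (intro mult_right_mono) (auto simp: X_def)
    also have "\<dots> \<le> (y * exp X) * exp a" using y by (intro mult_left_mono) auto
    also have "\<dots> = y * exp (X + a)" by (simp add: exp_add)
    also have "X + a = K2*b*(1 - \<rho>^Suc n)/(1-\<rho>)" using rho_lt1
      by (simp add: X_def a_def field_simps)
    finally show ?case .
  qed
  moreover have "y * exp (K2*b*(1 - \<rho>^n)/(1-\<rho>)) \<le> y * exp (K2*b/(1-\<rho>))" for n
  proof -
    have "0 \<le> K2*b*\<rho>^n" using K2 bpos rho_pos by simp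
    then have "K2*b*(1 - \<rho>^n) \<le> K2*b" by (simp add: algebra_simps)
    then have "K2*b*(1 - \<rho>^n)/(1-\<rho>) \<le> K2*b/(1-\<rho>)" using rho_lt1 by (simp add: divide_right_mono)
    then show ?thesis using y by (intro mult_left_mono) auto
  qed
  ultimately show ?thesis by (meson order_trans)
qed

definition Phi :: "real \<Rightarrow> real" where "Phi y = lim (\<lambda>n. s n y)"

lemma Phi_lim: assumes "y \<in> {0..b}" shows "(\<lambda>n. s n y) \<longlonglongrightarrow> Phi y" and "s n y \<le> Phi y"
proof -
  obtain B where "\<forall>n. s n y \<le> B" using s_bdd assms by blast
  then obtain L where L: "(\<lambda>n. s n y) \<longlonglongrightarrow> L" "\<forall>i. s i y \<le> L"
    using incseq_convergent[OF s_inc[OF assms]] by blast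
  have "Phi y = L" unfolding Phi_def using L(1) by (rule limI)
  then show "(\<lambda>n. s n y) \<longlonglongrightarrow> Phi y" and "s n y \<le> Phi y" using L by auto
qed

lemma Phi_ge: "y \<in> {0..b} \<Longrightarrow> y \<le> Phi y"
  using Phi_lim(2)[of y 0] by (simp add: s_def)

lemma Phi_f: assumes y: "y \<in> {0..b}" shows "Phi (f y) = Phi y / c"
proof -
  have fy: "f y \<in> {0..b}" using fmap y by auto
  have "(\<lambda>n. s (Suc n) y / c) \<longlonglongrightarrow> Phi y / c"
    using LIMSEQ_Suc[OF Phi_lim(1)[OF y]] c1 by (intro tendsto_intros) auto
  moreover have "s (Suc n) y / c = s n (f y)" for n
    using c1 by (simp add: s_def funpow_Suc_right del: funpow.simps)
  ultimately have "(\<lambda>n. s n (f y)) \<longlonglongrightarrow> Phi y / c" by simp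
  then show ?thesis using Phi_lim(1)[OF fy] LIMSEQ_unique by blast
qed

lemma Phi_mono: assumes "0 \<le> x" "x \<le> y" "y \<le> b" shows "Phi x \<le> Phi y"
proof -
  have "s n x \<le> s n y" for n using iter_mono[OF assms] c1 by (simp add: s_def)
  then show ?thesis using Phi_lim(1)[of x] Phi_lim(1)[of y] assms
    by (intro LIMSEQ_le) auto
qed

lemma Phi_strict: assumes "0 < x" "x < y" "y \<le> b" shows "Phi x < Phi y"
proof -
  have rat: "y * (f^^n) x \<le> x * (f^^n) y" for n
  proof (induct n)
    case 0 then show ?case by (simp add: mult.commute)
  next
    case (Suc n)
    define a where "a = (f^^n) x"
    define a' where "a' = (f^^n) y"
    have a: "0 < a" using iter_pos assms by (simp add: a_def)
    have aa: "a \<le> a'" using iter_mono assms by (simp add: a_def a'_def)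
    have a'b: "a' \<le> b" using iter_in assms by (simp add: a'_def)
    have sl: "a' * f a \<le> a * f a'" using slope_le a aa a'b by blast
    have fa: "0 \<le> f a" using fge0 a aa a'b by auto
    have "a * (y * f a) = (y * a) * f a" by simp
    also have "\<dots> \<le> (x * a') * f a" using Suc fa by (intro mult_right_mono) (auto simp: a_def a'_def)
    also have "\<dots> = x * (a' * f a)" by simp
    also have "\<dots> \<le> x * (a * f a')" using sl assms by (intro mult_left_mono) auto
    also have "\<dots> = a * (x * f a')" by simp
    finally have "y * f a \<le> x * f a'" using a by simp
    then show ?case by (simp add: a_def a'_def)
  qed
  have "y * s n x \<le> x * s n y" for n
    using mult_left_mono[OF rat[of n], of "c^n"] c1 by (simp add: s_def algebra_simps)
  moreover have "(\<lambda>n. y * s n x) \<longlonglongrightarrow> y * Phi x" using Phi_lim(1)[of x] assms by (intro tendsto_intros) auto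
  moreover have "(\<lambda>n. x * s n y) \<longlonglongrightarrow> x * Phi y" using Phi_lim(1)[of y] assms by (intro tendsto_intros) auto
  ultimately have le: "y * Phi x \<le> x * Phi y" by (intro LIMSEQ_le) auto
  have "0 < Phi x" using Phi_ge[of x] assms by auto
  then have "x * Phi x < y * Phi x" using assms by simp
  with le have "x * Phi x < x * Phi y" by simp
  then show ?thesis using assms by simp
qed

end


lemma phi_word_append: "phi_word \<phi> (w @ u) = phi_word \<phi> w \<circ> phi_word \<phi> u"
  by (induct w) auto

lemma phi_word_in:
  assumes "\<And>j y. j \<le> L \<Longrightarrow> y \<in> {0..b} \<Longrightarrow> \<phi> j y \<in> {0..b}"
  shows "set w \<subseteq> {..L} \<Longrightarrow> y \<in> {0..b} \<Longrightarrow> phi_word \<phi> w y \<in> {0..b}"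
  by (induct w) (use assms in auto)

lemma gap_avoid:
  fixes c A B v :: real
  assumes c: "c > 1" and AB: "0 \<le> A" "0 \<le> B"
    and v1: "v \<le> c^t * A" and v2: "c^t * B \<le> c * v"
  shows "\<not> (c^k * A < v \<and> v < c^k * B)"
proof (cases "t \<le> k")
  case True
  then have "c^t \<le> c^k" using c by (simp add: power_increasing)
  then have "c^t * A \<le> c^k * A" using AB by (intro mult_right_mono) auto
  then show ?thesis using v1 by auto
next
  case False
  then have "c^(Suc k) \<le> c^t" using c by (intro power_increasing) auto
  then have "c * (c^k * B) \<le> c^t * B" using AB by (simp add: mult_right_mono mult.assoc[symmetric])
  then have "c * (c^k * B) \<le> c * v" using v2 by linarith
  then have "c^k * B \<le> v" using c by simp
  then show ?thesis by auto
qed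

lemma nat_set_card_bound:
  fixes S :: "nat set"
  assumes "\<And>p q. p \<in> S \<Longrightarrow> q \<in> S \<Longrightarrow> p < q \<Longrightarrow> q - p < T"
  shows "finite S \<and> card S \<le> 2*T+1"
proof (cases "S = {}")
  case True then show ?thesis by simp
next
  case False
  then obtain p0 where p0: "p0 \<in> S" by blast
  have sub: "S \<subseteq> {p0 - T..p0 + T}"
  proof
    fix q assume q: "q \<in> S"
    consider "q < p0" | "q = p0" | "p0 < q" by linarith
    then show "q \<in> {p0 - T..p0 + T}"
      using assms[OF q p0] assms[OF p0 q] by cases auto
  qed
  then have "card S \<le> card {p0 - T..p0 + T}" by (intro card_mono) auto
  also have "\<dots> \<le> 2*T+1" by simp
  finally show ?thesis using sub finite_subset by blast
qed

theorem theorem4p1: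
  fixes R :: "real \<Rightarrow> real" and c b :: real and L J :: nat
    and \<phi> :: "nat \<Rightarrow> real \<Rightarrow> real" and \<sigma> :: "nat \<Rightarrow> real set" and E :: "real set"
    and ev :: "nat \<Rightarrow> real"
  assumes R_rat: "real_rational_fun R"
    and R0: "R 0 = 0"
    and c_def: "(R has_real_derivative c) (at 0)"
    and c_gt: "c > 1"
    \<comment> \<open>graph spectra: finite, and the graph-level spectral decimation relation\<close>
    and \<sigma>_fin: "\<And>i. finite (\<sigma> i)"
    and \<sigma>0: "\<sigma> 0 \<subseteq> {0..b}"
    and \<sigma>_dec: "\<And>i. \<sigma> (Suc i) \<subseteq> {z. R z \<in> \<sigma> i} \<union> E"
    and E_fin: "finite E"
    and E_le_b: "E \<subseteq> {0..b}"
    \<comment> \<open>the eigenvalues of Delta, listed with multiplicity, form an unbounded nondecreasing sequence\<close>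
    and ev_nonneg: "\<And>k. 0 \<le> ev k"
    and ev_mono: "mono ev"
    and ev_unbdd: "filterlim ev at_top sequentially"
    and sd: "admits_spectral_decimation ev c L \<phi> \<sigma> E"
    and preimage: "{x. R x \<in> {0..b}} \<subseteq> {0..b}"
    and pinv: "partial_inverses R b L \<phi>"
    and phi0_b: "\<phi> 0 b < b"
    and phi0_convex: "strictly_convex_on {0..b} (\<phi> 0)"
    and J_lt: "J < L"
    and M_lt_m: "Sup (\<phi> J ` {0..b}) < Inf (\<phi> (Suc J) ` {0..b})"
  shows "has_spectral_gaps ev \<and>
    (\<exists>a\<^sub>M a\<^sub>m. ((\<lambda>n. c ^ n * (\<phi> 0 ^^ (n - 1)) (Sup (\<phi> J ` {0..b}))) \<longlonglongrightarrow> a\<^sub>M) \<and>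
             ((\<lambda>n. c ^ n * (\<phi> 0 ^^ (n - 1)) (Inf (\<phi> (Suc J) ` {0..b}))) \<longlonglongrightarrow> a\<^sub>m) \<and>
             (\<exists>N::nat. \<forall>k::nat.
                finite {x \<in> range ev. c ^ k * a\<^sub>M < x \<and> x < c ^ k * a\<^sub>m} \<and>
                card {x \<in> range ev. c ^ k * a\<^sub>M < x \<and> x < c ^ k * a\<^sub>m} \<le> N))"
proof -
  have pc: "\<And>j. j \<le> L \<Longrightarrow> continuous_on {0..b} (\<phi> j)"
    and pR: "\<And>j y. j \<le> L \<Longrightarrow> y \<in> {0..b} \<Longrightarrow> R (\<phi> j y) = y"
    and pcov: "{x. R x \<in> {0..b}} = (\<Union>j\<le>L. \<phi> j ` {0..b})"
    and p0: "0 \<in> \<phi> 0 ` {0..b}"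
    and pord: "\<And>i x y. i < L \<Longrightarrow> x \<in> {0..b} \<Longrightarrow> y \<in> {0..b} \<Longrightarrow> \<phi> i x \<le> \<phi> (Suc i) y"
    using pinv unfolding partial_inverses_def by auto
  have pmap: "\<phi> j y \<in> {0..b}" if "j \<le> L" "y \<in> {0..b}" for j y
  proof -
    have "\<phi> j y \<in> {x. R x \<in> {0..b}}" using pR[OF that] that(2) by simp
    then show ?thesis using preimage by blast
  qed
  obtain y0 where y0: "y0 \<in> {0..b}" "\<phi> 0 y0 = 0" using p0 by auto
  have f0: "\<phi> 0 0 = 0"
  proof -
    have "y0 = R (\<phi> 0 y0)" using pR[of 0 y0] y0 by simp
    then have "y0 = 0" using y0 R0 by simp
    then show ?thesis using y0 by simp
  qed
  have b0: "0 \<le> b" using y0 by auto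
  have bpos: "b > 0"
  proof (rule ccontr)
    assume "\<not> b > 0"
    then have "b = 0" using b0 by simp
    then show False using phi0_b f0 by simp
  qed
  interpret P: phi0 R c b "\<phi> 0"
  proof
    show "c > 1" by (rule c_gt)
    show "b > 0" by (rule bpos)
    show "\<And>y. y \<in> {0..b} \<Longrightarrow> \<phi> 0 y \<in> {0..b}" using pmap by simp
    show "\<phi> 0 0 = 0" by (rule f0)
    show "\<And>y. y \<in> {0..b} \<Longrightarrow> R (\<phi> 0 y) = y" using pR by simp
    show "\<phi> 0 b < b" by (rule phi0_b)
    show "strictly_convex_on {0..b} (\<phi> 0)" by (rule phi0_convex)
    show "R 0 = 0" by (rule R0)
    show "\<exists>\<delta>>0. \<exists>K\<ge>0. \<forall>x. 0 < x \<and> x \<le> \<delta> \<longrightarrow> \<bar>R x - c*x\<bar> \<le> K * x^2"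
      by (rule rat_bound[OF R_rat R0 c_def])
  qed
  have chain: "\<phi> i x \<le> \<phi> j y" if "i < j" "j \<le> L" "x \<in> {0..b}" "y \<in> {0..b}" for i j x y
    using that
  proof (induct j arbitrary: y)
    case 0 then show ?case by simp
  next
    case (Suc j)
    show ?case
    proof (cases "i = j")
      case True then show ?thesis using pord Suc by auto
    next
      case False
      then have "\<phi> i x \<le> \<phi> j b" using Suc b0 by auto
      also have "\<dots> \<le> \<phi> (Suc j) y" using pord Suc b0 by auto
      finally show ?thesis .
    qed
  qed
  define M where "M = Sup (\<phi> J ` {0..b})"
  define m where "m = Inf (\<phi> (Suc J) ` {0..b})"
  have JL: "J \<le> L" "Suc J \<le> L" using J_lt by auto
  have bddA: "bdd_above (\<phi> J ` {0..b})" unfolding bdd_above_def using pmap[OF JL(1)] by (auto intro!: exI[of _ b])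
  have bddB: "bdd_below (\<phi> (Suc J) ` {0..b})" unfolding bdd_below_def using pmap[OF JL(2)] by (auto intro!: exI[of _ 0])
  have ne: "{0..b} \<noteq> {}" using b0 by simp
  have M_ge: "\<phi> J z \<le> M" if "z \<in> {0..b}" for z
    unfolding M_def using bddA that by (rule cSUP_upper2) simp
  have M_le: "M \<le> b" unfolding M_def using ne pmap[OF JL(1)] by (intro cSUP_least) auto
  have m_le: "m \<le> \<phi> (Suc J) z" if "z \<in> {0..b}" for z
    unfolding m_def using bddB that by (rule cINF_lower2) simp
  have m_ge: "0 \<le> m" unfolding m_def using ne pmap[OF JL(2)] by (intro cINF_greatest) auto
  have Mm: "M < m" using M_lt_m by (simp add: M_def m_def)
  have bb: "b \<in> {0..b}" using b0 by simp
  have f0b_M: "\<phi> 0 b \<le> M"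
  proof (cases "J = 0")
    case True then show ?thesis using M_ge[OF bb] by simp
  next
    case False
    then have "\<phi> 0 b \<le> \<phi> J b" using chain JL bb by auto
    then show ?thesis using M_ge[OF bb] by simp
  qed
  have f0bpos: "0 < \<phi> 0 b" using P.fpos bpos by simp
  have Mpos: "0 < M" using f0b_M f0bpos by simp
  have m_b: "m \<le> b" using m_le[OF bb] pmap[OF JL(2) bb] by simp
  have Mb: "M \<in> {0..b}" and mb: "m \<in> {0..b}" using Mpos M_le m_ge m_b by auto
  define A where "A = c * P.Phi M"
  define B where "B = c * P.Phi m"
  have PhiMpos: "0 < P.Phi M" using P.Phi_ge[OF Mb] Mpos by simp
  have A0: "0 < A" using PhiMpos c_gt by (simp add: A_def)
  have AB: "A < B" using P.Phi_strict[OF Mpos Mm m_b] c_gt by (simp add: A_def B_def)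
  have limM: "(\<lambda>n. c ^ n * (\<phi> 0 ^^ (n - 1)) M) \<longlonglongrightarrow> A"
  proof (rule LIMSEQ_imp_Suc)
    have "(\<lambda>n. c * P.s n M) \<longlonglongrightarrow> A" unfolding A_def using P.Phi_lim(1)[OF Mb] by (intro tendsto_intros)
    then show "(\<lambda>n. c ^ Suc n * (\<phi> 0 ^^ (Suc n - 1)) M) \<longlonglongrightarrow> A" by (simp add: P.s_def mult.assoc)
  qed
  have limm: "(\<lambda>n. c ^ n * (\<phi> 0 ^^ (n - 1)) m) \<longlonglongrightarrow> B"
  proof (rule LIMSEQ_imp_Suc)
    have "(\<lambda>n. c * P.s n m) \<longlonglongrightarrow> B" unfolding B_def using P.Phi_lim(1)[OF mb] by (intro tendsto_intros)
    then show "(\<lambda>n. c ^ Suc n * (\<phi> 0 ^^ (Suc n - 1)) m) \<longlonglongrightarrow> B" by (simp add: P.s_def mult.assoc)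
  qed
  define F where "F = \<sigma> 0 \<union> E"
  have Ffin: "finite F" using \<sigma>_fin E_fin by (simp add: F_def)
  have Fb: "F \<subseteq> {0..b}" using \<sigma>0 E_le_b by (auto simp: F_def)
  have phimap: "\<And>j y. j \<le> L \<Longrightarrow> y \<in> {0..b} \<Longrightarrow> \<phi> j y \<in> {0..b}" using pmap by blast
  have sdec: "\<exists>u e. e \<in> F \<and> set u \<subseteq> {..L} \<and> length u \<le> i \<and> x = phi_word \<phi> u e"
    if "x \<in> \<sigma> i" for i x
    using that
  proof (induct i arbitrary: x)
    case 0 then show ?case by (intro exI[of _ "[]"] exI[of _ x]) (auto simp: F_def)
  next
    case (Suc i)
    have "x \<in> {z. R z \<in> \<sigma> i} \<union> E" using \<sigma>_dec Suc.prems by blast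
    then consider "x \<in> E" | "R x \<in> \<sigma> i" by blast
    then show ?case
    proof cases
      case 1 then show ?thesis by (intro exI[of _ "[]"] exI[of _ x]) (auto simp: F_def)
    next
      case 2
      then obtain u e where ue: "e \<in> F" "set u \<subseteq> {..L}" "length u \<le> i" "R x = phi_word \<phi> u e"
        using Suc.hyps by blast
      have "R x \<in> {0..b}" using ue phi_word_in[OF phimap] Fb by auto
      then have "x \<in> (\<Union>j\<le>L. \<phi> j ` {0..b})" using pcov by blast
      then obtain j y where jy: "j \<le> L" "y \<in> {0..b}" "x = \<phi> j y" by blast
      have "y = R x" using pR[OF jy(1,2)] jy(3) by simp
      then have "x = phi_word \<phi> (j # u) e" using jy ue by simp
      then show ?thesis using ue jy by (intro exI[of _ "j # u"] exI[of _ e]) auto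
    qed
  qed
  have wv: "(\<exists>p'. c^(p+length v) * P.Phi (phi_word \<phi> v e) = c^p' * P.Phi e) \<or>
      (\<exists>t. c^(p+length v) * P.Phi (phi_word \<phi> v e) \<le> c^t * A \<and>
           c^t * B \<le> c * (c^(p+length v) * P.Phi (phi_word \<phi> v e)))"
    if e: "e \<in> {0..b}" and vL: "set v \<subseteq> {..L}" for e v p
    using vL
  proof (induct v arbitrary: p)
    case Nil then show ?case by auto
  next
    case (Cons a v)
    define z where "z = phi_word \<phi> v e"
    have vL': "set v \<subseteq> {..L}" and aL: "a \<le> L" using Cons.prems by auto
    have z: "z \<in> {0..b}" unfolding z_def using phi_word_in[OF phimap vL' e] .
    define y where "y = \<phi> a z"
    have y: "y \<in> {0..b}" using phimap[OF aL z] by (simp add: y_def)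
    have pw: "phi_word \<phi> (a # v) e = y" by (simp add: y_def z_def)
    define Q where "Q = p + length (a # v)"
    have Q: "Q = Suc (p + length v)" by (simp add: Q_def)
    have cpos: "0 < c" using c_gt by simp
    have Phib: "P.Phi b = c * P.Phi (\<phi> 0 b)" using P.Phi_f[OF bb] cpos by simp
    consider "a = 0" | "0 < a \<and> a \<le> J" | "J < a" by linarith
    then show ?case
    proof cases
      case 1
      have "c^Q * P.Phi y = c^(p + length v) * P.Phi z"
        using P.Phi_f[OF z] cpos 1 by (simp add: Q y_def)
      then have eq: "c^(p + length (a#v)) * P.Phi (phi_word \<phi> (a#v) e) = c^(p+length v) * P.Phi (phi_word \<phi> v e)"
        by (simp only: pw Q_def[symmetric] z_def)
      show ?thesis unfolding eq by (rule Cons.hyps[OF vL', of p])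
    next
      case 2
      have yM: "y \<le> M"
      proof (cases "a = J")
        case True then show ?thesis using M_ge[OF z] by (simp add: y_def)
      next
        case False
        then have "y \<le> \<phi> J b" using chain[of a J z b] 2 JL bb z by (simp add: y_def)
        then show ?thesis using M_ge[OF bb] by simp
      qed
      have yge: "\<phi> 0 b \<le> y" using chain[of 0 a b z] 2 aL bb z by (simp add: y_def)
      have f0bb: "\<phi> 0 b \<in> {0..b}" using phimap bb by simp
      have "c^Q * P.Phi y \<le> c^(p + length v) * A"
      proof -
        have "P.Phi y \<le> P.Phi M" using P.Phi_mono[of y M] y yM M_le by auto
        then show ?thesis using cpos by (simp add: Q A_def mult.assoc mult_left_mono)
      qed
      moreover have "c^(p + length v) * B \<le> c * (c^Q * P.Phi y)"
      proof -
        have "P.Phi m \<le> P.Phi b" using P.Phi_mono[of m b] mb by auto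
        also have "\<dots> \<le> c * P.Phi y" using Phib P.Phi_mono[of "\<phi> 0 b" y] yge f0bb y cpos by auto
        finally have "c * P.Phi m \<le> c * (c * P.Phi y)" using cpos by simp
        then show ?thesis using cpos by (simp add: Q B_def mult.assoc mult_left_mono)
      qed
      moreover have eq: "c^(p + length (a#v)) * P.Phi (phi_word \<phi> (a#v) e) = c^Q * P.Phi y"
        by (simp only: pw Q_def[symmetric])
      ultimately show ?thesis by (simp only: eq) blast
    next
      case 3
      have ym: "m \<le> y"
      proof (cases "a = Suc J")
        case True then show ?thesis using m_le[OF z] by (simp add: y_def)
      next
        case False
        then have "\<phi> (Suc J) b \<le> y" using chain[of "Suc J" a b z] 3 aL bb z by (simp add: y_def)
        then show ?thesis using m_le[OF bb] by simp
      qed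
      have f0bb: "\<phi> 0 b \<in> {0..b}" using phimap bb by simp
      have "c^Q * P.Phi y \<le> c^Q * A"
      proof -
        have "P.Phi y \<le> P.Phi b" using P.Phi_mono[of y b] y by auto
        also have "\<dots> \<le> c * P.Phi M" using Phib P.Phi_mono[of "\<phi> 0 b" M] f0b_M f0bb M_le cpos by auto
        finally show ?thesis using cpos by (simp add: A_def)
      qed
      moreover have "c^Q * B \<le> c * (c^Q * P.Phi y)"
      proof -
        have "P.Phi m \<le> P.Phi y" using P.Phi_mono[of m y] ym m_ge y by auto
        then show ?thesis using cpos by (simp add: B_def mult.left_commute mult_left_mono)
      qed
      moreover have eq: "c^(p + length (a#v)) * P.Phi (phi_word \<phi> (a#v) e) = c^Q * P.Phi y"
        by (simp only: pw Q_def[symmetric])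
      ultimately show ?thesis by (simp only: eq) blast
    qed
  qed
  have classify: "\<exists>e\<in>F. \<exists>p. v = c^p * P.Phi e" if v: "v \<in> range ev" and gap: "c^k * A < v \<and> v < c^k * B" for v k
  proof -
    have "v \<in> decimation_values c L \<phi> \<sigma> E" using v sd unfolding admits_spectral_decimation_def by blast
    then obtain i w x l where x: "x \<in> \<sigma> i \<union> E" and wL: "set w \<subseteq> {..L}"
      and lim: "(\<lambda>n. c ^ (n + length w) * (\<phi> 0 ^^ n) (phi_word \<phi> w x)) \<longlonglongrightarrow> l"
      and vl: "v = c^i * l"
      unfolding decimation_values_def by blast
    obtain u e where ue: "e \<in> F" "set u \<subseteq> {..L}" "length u \<le> i" "x = phi_word \<phi> u e"
    proof (cases "x \<in> E")
      case True then show ?thesis using that[of x "[]"] by (auto simp: F_def)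
    next
      case False then show ?thesis using that sdec x by blast
    qed
    have eb: "e \<in> {0..b}" using ue Fb by auto
    have xb: "x \<in> {0..b}" using ue phi_word_in[OF phimap ue(2) eb] by simp
    define y where "y = phi_word \<phi> w x"
    have y: "y \<in> {0..b}" unfolding y_def using phi_word_in[OF phimap wL xb] .
    have "(\<lambda>n. c^(length w) * P.s n y) \<longlonglongrightarrow> c^(length w) * P.Phi y"
      using P.Phi_lim(1)[OF y] by (intro tendsto_intros)
    moreover have "(\<lambda>n. c^(length w) * P.s n y) = (\<lambda>n. c ^ (n + length w) * (\<phi> 0 ^^ n) (phi_word \<phi> w x))"
      by (simp add: P.s_def y_def power_add mult_ac)
    ultimately have "l = c^(length w) * P.Phi y" using lim LIMSEQ_unique by metis
    then have vv: "v = c^((i - length u) + length (w @ u)) * P.Phi (phi_word \<phi> (w @ u) e)"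
      using vl ue(3) by (simp add: y_def ue(4) phi_word_append power_add[symmetric])
    have wuL: "set (w @ u) \<subseteq> {..L}" using wL ue by auto
    from wv[OF eb wuL, of "i - length u"]
    show ?thesis
    proof
      assume "\<exists>p'. c^((i - length u) + length (w @ u)) * P.Phi (phi_word \<phi> (w @ u) e) = c^p' * P.Phi e"
      then show ?thesis using vv ue by auto
    next
      assume "\<exists>t. c^((i - length u) + length (w @ u)) * P.Phi (phi_word \<phi> (w @ u) e) \<le> c^t * A \<and>
           c^t * B \<le> c * (c^((i - length u) + length (w @ u)) * P.Phi (phi_word \<phi> (w @ u) e))"
      then obtain t where "v \<le> c^t * A" "c^t * B \<le> c * v" using vv by auto
      then have "\<not> (c^k * A < v \<and> v < c^k * B)" using gap_avoid[OF c_gt, of A B v t k] A0 AB by auto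
      with gap show ?thesis by blast
    qed
  qed
  obtain T :: nat where T: "B/A < c^T" using real_arch_pow[OF c_gt] by blast
  define S where "S e k = {p::nat. c^k*A < c^p * P.Phi e \<and> c^p * P.Phi e < c^k*B}" for e k
  have Sb: "finite (S e k) \<and> card (S e k) \<le> 2*T+1" for e k
  proof (rule nat_set_card_bound)
    fix p q assume p: "p \<in> S e k" and q: "q \<in> S e k" and pq: "p < q"
    have ck: "0 < c^k" using c_gt by simp
    have pp: "c^k*A < c^p * P.Phi e" "c^q * P.Phi e < c^k*B" using p q by (auto simp: S_def)
    have cq: "c^q = c^(q-p) * c^p" using pq by (simp add: power_add[symmetric])
    have "c^(q-p) * (c^k * A) < c^(q-p) * (c^p * P.Phi e)" using pp(1) c_gt by (intro mult_strict_left_mono) auto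
    also have "\<dots> = c^q * P.Phi e" using cq by simp
    also have "\<dots> < c^k * B" by (rule pp(2))
    finally have "c^k * (c^(q-p) * A) < c^k * B" by (simp add: mult.left_commute)
    then have "c^(q-p) * A < B" using ck by simp
    then have "c^(q-p) < B/A" using A0 by (simp add: field_simps)
    then have "c^(q-p) < c^T" using T by simp
    then show "q - p < T" using c_gt by simp
  qed
  define G where "G k = {x \<in> range ev. c^k*A < x \<and> x < c^k*B}" for k
  define N where "N = card F * (2*T+1)"
  have Gsub: "G k \<subseteq> (\<Union>e\<in>F. (\<lambda>p. c^p * P.Phi e) ` S e k)" for k
  proof
    fix x assume x: "x \<in> G k"
    then obtain e p where "e \<in> F" "x = c^p * P.Phi e" using classify unfolding G_def by blast
    then show "x \<in> (\<Union>e\<in>F. (\<lambda>p. c^p * P.Phi e) ` S e k)" using x unfolding G_def S_def by auto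
  qed
  have Gfin: "finite (G k)" and Gcard: "card (G k) \<le> N" for k
  proof -
    have fin: "finite (\<Union>e\<in>F. (\<lambda>p. c^p * P.Phi e) ` S e k)" using Ffin Sb by auto
    show "finite (G k)" using finite_subset[OF Gsub fin] .
    have "card (G k) \<le> card (\<Union>e\<in>F. (\<lambda>p. c^p * P.Phi e) ` S e k)" by (rule card_mono[OF fin Gsub])
    also have "\<dots> \<le> (\<Sum>e\<in>F. card ((\<lambda>p. c^p * P.Phi e) ` S e k))" by (rule card_UN_le[OF Ffin])
    also have "\<dots> \<le> (\<Sum>e\<in>F. 2*T+1)" by (intro sum_mono) (meson Sb card_image_le order_trans)
    also have "\<dots> = N" by (simp add: N_def)
    finally show "card (G k) \<le> N" .
  qed
  define r where "r = root (N+2) (B/A)"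
  have BA: "1 < B/A" using A0 AB by simp
  have r1: "1 < r" using BA by (simp add: r_def)
  have rpow: "r^(N+2) = B/A" unfolding r_def using BA by (intro real_root_pow_pos2) auto
  have hole: "\<exists>s\<le>N. \<not>(\<exists>v\<in>range ev. c^k*A*r^s < v \<and> v \<le> c^k*A*r^(Suc s))" for k
  proof (rule ccontr)
    assume "\<not> ?thesis"
    then have allv: "\<forall>s\<le>N. \<exists>v. v \<in> range ev \<and> c^k*A*r^s < v \<and> v \<le> c^k*A*r^(Suc s)" by blast
    define g where "g s = (SOME v. v \<in> range ev \<and> c^k*A*r^s < v \<and> v \<le> c^k*A*r^(Suc s))" for s
    have g: "g s \<in> range ev \<and> c^k*A*r^s < g s \<and> g s \<le> c^k*A*r^(Suc s)" if "s \<le> N" for s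
      unfolding g_def by (rule someI_ex) (use allv that in blast)
    have ckA: "0 < c^k*A" using c_gt A0 by simp
    have tmono: "c^k*A*r^i \<le> c^k*A*r^j" if "i \<le> j" for i j
      using r1 ckA that by (intro mult_left_mono power_increasing) auto
    have gG: "g s \<in> G k" if "s \<le> N" for s
    proof -
      have "c^k*A*r^0 \<le> c^k*A*r^s" by (rule tmono) simp
      then have lo: "c^k*A < g s" using g[OF that] by simp
      have "g s \<le> c^k*A*r^(Suc s)" using g[OF that] by simp
      also have "\<dots> \<le> c^k*A*r^(N+1)" using that by (intro tmono) simp
      also have "\<dots> < c^k*A*r^(N+2)" using ckA r1 by (intro mult_strict_left_mono power_strict_increasing) auto
      also have "\<dots> = c^k*B" using rpow A0 by simp
      finally show ?thesis using g[OF that] lo by (simp add: G_def)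
    qed
    have inj: "inj_on g {0..N}"
    proof (rule inj_onI)
      fix s s' assume s: "s \<in> {0..N}" and s': "s' \<in> {0..N}" and eq: "g s = g s'"
      show "s = s'"
      proof (rule ccontr)
        assume "s \<noteq> s'"
        then consider "s < s'" | "s' < s" by linarith
        then show False
        proof cases
          case 1
          have "g s \<le> c^k*A*r^(Suc s)" using g s by simp
          also have "\<dots> \<le> c^k*A*r^s'" using 1 by (intro tmono) simp
          also have "\<dots> < g s'" using g s' by simp
          finally show False using eq by simp
        next
          case 2
          have "g s' \<le> c^k*A*r^(Suc s')" using g s' by simp
          also have "\<dots> \<le> c^k*A*r^s" using 2 by (intro tmono) simp
          also have "\<dots> < g s" using g s by simp
          finally show False using eq by simp
        qed
      qed
    qed
    have "g ` {0..N} \<subseteq> G k" using gG by auto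
    then have "card {0..N} \<le> card (G k)" using card_inj_on_le[OF inj _ Gfin] by blast
    then show False using Gcard[of k] by simp
  qed
  obtain n1 where n1: "\<And>n. n \<ge> n1 \<Longrightarrow> 1 \<le> ev n"
    using ev_unbdd unfolding filterlim_at_top eventually_sequentially by blast
  have freq: "\<exists>n\<ge>n0. r \<le> ev (Suc n) / ev n" for n0
  proof -
    define n2 where "n2 = max n0 n1"
    obtain k where k: "ev n2 / A < c^k" using real_arch_pow[OF c_gt] by blast
    then have kk: "ev n2 < c^k*A" using A0 by (simp add: field_simps)
    obtain s where s: "s \<le> N" "\<not>(\<exists>v\<in>range ev. c^k*A*r^s < v \<and> v \<le> c^k*A*r^(Suc s))"
      using hole by blast
    define T0 where "T0 = c^k*A*r^s"
    have "1 \<le> r^s" using r1 by simp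
    moreover have "0 \<le> c^k*A" using A0 c_gt by simp
    ultimately have T0ge: "c^k*A \<le> T0" unfolding T0_def
      using mult_left_mono[of 1 "r^s" "c^k*A"] by simp
    obtain n3 where n3: "\<And>n. n \<ge> n3 \<Longrightarrow> T0 + 1 \<le> ev n"
      using ev_unbdd unfolding filterlim_at_top eventually_sequentially by blast
    define Qs where "Qs = {n. ev n \<le> T0}"
    have "Qs \<subseteq> {..<n3}"
    proof
      fix n assume "n \<in> Qs"
      then have en: "ev n \<le> T0" by (simp add: Qs_def)
      show "n \<in> {..<n3}"
      proof (rule ccontr)
        assume "n \<notin> {..<n3}"
        then have "T0 + 1 \<le> ev n" using n3 by simp
        then show False using en by simp
      qed
    qed
    then have Qfin: "finite Qs" by (rule finite_subset) simp
    have n2Q: "n2 \<in> Qs" using kk T0ge by (simp add: Qs_def)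
    define n where "n = Max Qs"
    have nQ: "n \<in> Qs" using Qfin n2Q Max_in unfolding n_def by blast
    have n2n: "n2 \<le> n" using Qfin n2Q Max_ge unfolding n_def by blast
    have "Suc n \<notin> Qs"
    proof
      assume "Suc n \<in> Qs"
      then have "Suc n \<le> n" using Qfin Max_ge unfolding n_def by blast
      then show False by simp
    qed
    then have up: "T0 < ev (Suc n)" by (simp add: Qs_def)
    have "ev (Suc n) \<in> range ev" by simp
    then have "\<not> (c^k*A*r^s < ev (Suc n) \<and> ev (Suc n) \<le> c^k*A*r^(Suc s))" using s(2) by blast
    then have "\<not> ev (Suc n) \<le> c^k*A*r^(Suc s)" using up unfolding T0_def by blast
    moreover have "c^k*A*r^(Suc s) = r * T0" unfolding T0_def by (simp add: mult_ac)
    ultimately have up2: "r * T0 < ev (Suc n)" by (metis not_le)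
    have evn: "ev n \<le> T0" using nQ by (simp add: Qs_def)
    have evpos: "0 < ev n" using n1[of n] n2n by (simp add: n2_def)
    have "r * ev n \<le> r * T0" using evn r1 by simp
    then have "r * ev n \<le> ev (Suc n)" using up2 by simp
    then have "r \<le> ev (Suc n) / ev n" using evpos by (simp add: field_simps)
    moreover have "n0 \<le> n" using n2n by (simp add: n2_def)
    ultimately show ?thesis by blast
  qed
  have gaps: "has_spectral_gaps ev"
  proof -
    have "ereal r \<le> (INF n. SUP m\<in>{n..}. ereal (ev (Suc m) / ev m))"
    proof (rule INF_greatest)
      fix n0 :: nat
      obtain n where n: "n \<ge> n0" "r \<le> ev (Suc n) / ev n" using freq by blast
      show "ereal r \<le> (SUP m\<in>{n0..}. ereal (ev (Suc m) / ev m))"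
        using n by (intro SUP_upper2[of n]) auto
    qed
    then have "ereal r \<le> limsup (\<lambda>k. ereal (ev (Suc k) / ev k))" by (simp add: limsup_INF_SUP)
    moreover have "1 < ereal r" using r1 by simp
    ultimately show ?thesis unfolding has_spectral_gaps_def by (meson less_le_trans)
  qed
  have "\<exists>N. \<forall>k. finite (G k) \<and> card (G k) \<le> N" using Gfin Gcard by blast
  then obtain NN where NN: "\<forall>k. finite (G k) \<and> card (G k) \<le> NN" by blast
  show ?thesis
    apply (rule conjI[OF gaps])
    apply (rule exI[of _ A], rule exI[of _ B])
    apply (rule conjI, use limM in \<open>simp add: M_def\<close>)
    apply (rule conjI, use limm in \<open>simp add: m_def\<close>)
    apply (rule exI[of _ NN])
    using NN unfolding G_def by simp
qed

end
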